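(* Let $n\geq1$ and $p\leq -n$. There exists a positive constant $C_{n,p}$ depending only on $n,p$ such that for every $u\in\mathcal{B}$, $$\|u\|_{Lip(\mathbb{S}^n)}\leq C_{n,p}\quad\text{and}\quad u(x)\geq C_{n,p}^{-1}\ \ \forall x\in\mathbb{S}^n,$$ where $\mathcal{B}=\{u\in H^*_+(\mathbb{S}^n):\ u \text{ is } (n+2)\text{-symmetric},\ \int_{\mathbb{S}^n}u^p\,d\sigma=|\mathbb{S}^n|\}$.
   Context: Fix $n+2$ points $q_1,\dots,q_{n+2}\in\mathbb{S}^n\subset\mathbb{R}^{n+1}$ spread evenly on $\mathbb{S}^n$, i.e. the vertices of a regular simplex inscribed in $\mathbb{S}^n$. Let $\mathcal{S}_{n+2}(q)$ be the set of rotations $\phi\in SO(n+1)$ mapping $\{q_1,\dots,q_{n+2}\}$ onto itself. A function $u$ is $(n+2)$-symmetric if $u\circ\phi=u$ for all $\phi\in\mathcal{S}_{n+2}(q)$. $H^*_+(\mathbb{S}^n)$ is the set of support functions $u$ of convex bodies $\Omega_u\subset\mathbb{R}^{n+1}$ with $u>0$ on $\mathbb{S}^n$ and $|\Omega_u|<\infty$. $d\sigma$ is the surface measure on $\mathbb{S}^n$. *)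

theory Defs
  imports "HOL-Analysis.Analysis"
begin

text \<open>Ambient space R^(n+1) is real^'n with CARD('n) = n+1; the sphere S^n is sphere 0 1.\<close>

definition regular_simplex_vertices :: "(real^'n) set \<Rightarrow> bool" where
  "regular_simplex_vertices Q \<longleftrightarrow> finite Q \<and> card Q = CARD('n) + 1 \<and>
     (\<forall>q\<in>Q. norm q = 1) \<and>
     (\<forall>q\<in>Q. \<forall>q'\<in>Q. q \<noteq> q' \<longrightarrow> q \<bullet> q' = - 1 / real CARD('n))"

definition simplex_rotations :: "(real^'n) set \<Rightarrow> (real^'n^'n) set" where
  "simplex_rotations Q = {A. rotation_matrix A \<and> (\<lambda>x. A *v x) ` Q = Q}"

definition symmetric_wrt :: "(real^'n) set \<Rightarrow> (real^'n \<Rightarrow> real) \<Rightarrow> bool" where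
  "symmetric_wrt Q u \<longleftrightarrow> (\<forall>A\<in>simplex_rotations Q. \<forall>x\<in>sphere 0 1. u (A *v x) = u x)"

definition support_fun :: "(real^'n) set \<Rightarrow> real^'n \<Rightarrow> real" where
  "support_fun K x = (SUP y\<in>K. x \<bullet> y)"

definition Hstar_plus :: "(real^'n \<Rightarrow> real) set" where
  "Hstar_plus = {u. \<exists>K. convex K \<and> compact K \<and> interior K \<noteq> {} \<and>
       emeasure lebesgue K < \<infinity> \<and>
       (\<forall>x\<in>sphere 0 1. u x = support_fun K x \<and> u x > 0)}"

text \<open>Integral over S^n w.r.t. the surface measure, via the cone formula
  int_{S^n} f d sigma = (n+1) * int_{B^{n+1}} f(x/|x|) dx.\<close>
definition sphere_integral :: "(real^'n \<Rightarrow> real) \<Rightarrow> real" where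
  "sphere_integral f = real CARD('n) * integral (ball 0 1) (\<lambda>x. f (x /\<^sub>R norm x))"

definition sphere_area :: "'n::finite itself \<Rightarrow> real" where
  "sphere_area _ = sphere_integral (\<lambda>x::real^'n. 1)"

definition lip_norm :: "(real^'n \<Rightarrow> real) \<Rightarrow> ereal" where
  "lip_norm u = (SUP x\<in>sphere 0 1. ereal \<bar>u x\<bar>) +
     (SUP xy\<in>{(x,y). x \<in> sphere 0 1 \<and> y \<in> sphere 0 1 \<and> x \<noteq> y}.
        ereal (\<bar>u (fst xy) - u (snd xy)\<bar> / dist (fst xy) (snd xy)))"

definition class_B :: "(real^'n) set \<Rightarrow> real \<Rightarrow> (real^'n \<Rightarrow> real) set" where
  "class_B Q p = {u. u \<in> Hstar_plus \<and> symmetric_wrt Q u \<and>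
      sphere_integral (\<lambda>x. u x powr p) = sphere_area TYPE('n)}"

end

theory Submission
  imports Defs
begin

lemma simplex_basic:
  fixes Q :: "(real^'n) set"
  assumes "regular_simplex_vertices Q"
  shows "finite Q" "card Q = CARD('n) + 1" "\<And>q. q \<in> Q \<Longrightarrow> norm q = 1"
    "\<And>q q'. q \<in> Q \<Longrightarrow> q' \<in> Q \<Longrightarrow> q \<noteq> q' \<Longrightarrow> q \<bullet> q' = - 1 / real CARD('n)"
    "\<And>q. q \<in> Q \<Longrightarrow> q \<bullet> q = 1"
  using assms unfolding regular_simplex_vertices_def by (auto simp: norm_eq_1)

lemma simplex_inner_sum:
  fixes Q :: "(real^'n) set"
  assumes Q: "regular_simplex_vertices Q" and q: "q \<in> Q"
  shows "q \<bullet> (\<Sum>r\<in>Q. r) = 0"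
proof -
  note B = simplex_basic[OF Q]
  have "q \<bullet> (\<Sum>r\<in>Q. r) = (\<Sum>r\<in>Q. q \<bullet> r)" by (simp add: inner_sum_right)
  also have "\<dots> = q \<bullet> q + (\<Sum>r\<in>Q - {q}. q \<bullet> r)"
    using B(1) q by (simp add: sum.remove)
  also have "(\<Sum>r\<in>Q - {q}. q \<bullet> r) = (\<Sum>r\<in>Q - {q}. - 1 / real CARD('n))"
    using B(4) q by (intro sum.cong) auto
  also have "\<dots> = real CARD('n) * (- 1 / real CARD('n))"
    using B(1,2) q by (simp add: card_Diff_singleton)
  finally show ?thesis using B(5)[OF q] by simp
qed

lemma simplex_sum_zero:
  fixes Q :: "(real^'n) set"
  assumes Q: "regular_simplex_vertices Q"
  shows "(\<Sum>r\<in>Q. r) = 0"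
proof -
  have "(\<Sum>r\<in>Q. r) \<bullet> (\<Sum>r\<in>Q. r) = (\<Sum>q\<in>Q. q \<bullet> (\<Sum>r\<in>Q. r))"
    by (simp add: inner_sum_left)
  also have "\<dots> = 0" using simplex_inner_sum[OF Q] by simp
  finally show ?thesis by simp
qed

lemma simplex_perp_zero:
  fixes Q :: "(real^'n) set"
  assumes Q: "regular_simplex_vertices Q" and x: "\<And>q. q \<in> Q \<Longrightarrow> x \<bullet> q = 0"
  shows "x = 0"
proof -
  note B = simplex_basic[OF Q]
  have "Q \<noteq> {}" using B(2) by auto
  then obtain q0 where q0: "q0 \<in> Q" by auto
  define Q' where "Q' = Q - {q0}"
  have fQ': "finite Q'" using B(1) by (simp add: Q'_def)
  have cQ': "card Q' = CARD('n)" using B(1,2) q0 by (simp add: Q'_def card_Diff_singleton)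
  have ind: "independent Q'"
    unfolding independent_explicit
  proof (intro conjI fQ' allI impI ballI)
    fix c v assume h: "(\<Sum>v\<in>Q'. c v *\<^sub>R v) = 0" and v: "v \<in> Q'"
    define C where "C = (\<Sum>v\<in>Q'. c v)"
    have key: "c s = C / (real CARD('n) + 1)" if s: "s \<in> Q'" for s
    proof -
      have "0 = s \<bullet> (\<Sum>v\<in>Q'. c v *\<^sub>R v)" using h by simp
      also have "\<dots> = (\<Sum>v\<in>Q'. c v * (s \<bullet> v))" by (simp add: inner_sum_right)
      also have "\<dots> = c s * (s \<bullet> s) + (\<Sum>v\<in>Q' - {s}. c v * (s \<bullet> v))"
        using fQ' s by (simp add: sum.remove)
      also have "(\<Sum>v\<in>Q' - {s}. c v * (s \<bullet> v)) = (\<Sum>v\<in>Q' - {s}. c v * (- 1 / real CARD('n)))"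
        using B(4) s by (intro sum.cong) (auto simp: Q'_def)
      also have "\<dots> = (C - c s) * (- 1 / real CARD('n))"
      proof -
        have "(\<Sum>v\<in>Q' - {s}. c v * (- 1 / real CARD('n))) = (\<Sum>v\<in>Q' - {s}. c v) * (- 1 / real CARD('n))"
          by (rule sum_distrib_right[symmetric])
        moreover have "(\<Sum>v\<in>Q' - {s}. c v) = C - c s"
          using fQ' s by (simp add: C_def sum.remove)
        ultimately show ?thesis by simp
      qed
      finally have "0 = c s + (C - c s) * (- 1 / real CARD('n))"
        using B(5) s by (simp add: Q'_def)
      then show ?thesis by (simp add: field_simps)
    qed
    have "C = (\<Sum>v\<in>Q'. C / (real CARD('n) + 1))"
      using key by (subst C_def) (rule sum.cong, auto)
    also have "\<dots> = real CARD('n) * (C / (real CARD('n) + 1))" using cQ' by simp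
    finally have "C = 0" by (simp add: field_simps)
    then show "c v = 0" using key[OF v] by simp
  qed
  have "(UNIV::(real^'n) set) \<subseteq> span Q'"
    by (rule card_ge_dim_independent[OF _ ind]) (auto simp: cQ')
  then have "x \<in> span Q'" by auto
  then obtain c where xc: "x = (\<Sum>v\<in>Q'. c v *\<^sub>R v)"
    using span_finite[OF fQ'] by auto
  have "x \<bullet> x = (\<Sum>v\<in>Q'. c v * (x \<bullet> v))"
    by (subst (2) xc) (simp add: inner_sum_right)
  also have "\<dots> = 0" using x by (auto simp: Q'_def)
  finally show ?thesis by simp
qed

lemma simplex_tight:
  fixes Q :: "(real^'n) set"
  assumes Q: "regular_simplex_vertices Q"
  shows "(\<Sum>q\<in>Q. (x \<bullet> q) *\<^sub>R q) = ((real CARD('n) + 1) / real CARD('n)) *\<^sub>R x"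
proof -
  note B = simplex_basic[OF Q]
  define v where "v = (\<Sum>q\<in>Q. (x \<bullet> q) *\<^sub>R q) - ((real CARD('n) + 1) / real CARD('n)) *\<^sub>R x"
  have "v = 0"
  proof (rule simplex_perp_zero[OF Q])
    fix s assume s: "s \<in> Q"
    have "v \<bullet> s = (\<Sum>q\<in>Q. (x \<bullet> q) * (q \<bullet> s)) - ((real CARD('n) + 1) / real CARD('n)) * (x \<bullet> s)"
      by (simp add: v_def inner_diff_left inner_sum_left)
    also have "(\<Sum>q\<in>Q. (x \<bullet> q) * (q \<bullet> s)) = (x \<bullet> s) * (s \<bullet> s) + (\<Sum>q\<in>Q - {s}. (x \<bullet> q) * (q \<bullet> s))"
      using B(1) s by (simp add: sum.remove)
    also have "(\<Sum>q\<in>Q - {s}. (x \<bullet> q) * (q \<bullet> s)) = (\<Sum>q\<in>Q - {s}. (x \<bullet> q)) * (- 1 / real CARD('n))"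
      unfolding sum_distrib_right using B(4) s by (intro sum.cong) auto
    also have "(\<Sum>q\<in>Q - {s}. (x \<bullet> q)) = (\<Sum>q\<in>Q. (x \<bullet> q)) - x \<bullet> s"
      using B(1) s by (simp add: sum.remove)
    also have "(\<Sum>q\<in>Q. (x \<bullet> q)) = x \<bullet> (\<Sum>q\<in>Q. q)" by (simp add: inner_sum_right)
    also have "\<dots> = 0" by (simp add: simplex_sum_zero[OF Q])
    finally show "v \<bullet> s = 0" using B(5)[OF s] by (simp add: field_simps)
  qed
  then show ?thesis by (simp add: v_def)
qed

definition Bmap :: "(real^'n) set \<Rightarrow> (real^'n \<Rightarrow> real^'n) \<Rightarrow> real^'n \<Rightarrow> real^'n" where
  "Bmap Q \<pi> z = (real CARD('n) / (real CARD('n) + 1)) *\<^sub>R (\<Sum>r\<in>Q. (r \<bullet> z) *\<^sub>R \<pi> r)"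

lemma card_real_pos: "real CARD('n::finite) > 0" by simp
lemma card_real_ne [simp]: "real CARD('n::finite) + real CARD('n) * real CARD('n) \<noteq> 0"
  by (metis add_pos_pos card_real_pos less_irrefl mult_pos_pos)

lemma linear_Bmap:
  fixes Q :: "(real^'n) set"
  shows "linear (Bmap Q \<pi>)"
proof (rule linearI)
  fix x y :: "real^'n" and c :: real
  show "Bmap Q \<pi> (x + y) = Bmap Q \<pi> x + Bmap Q \<pi> y"
    unfolding Bmap_def by (simp add: inner_add_right scaleR_add_left sum.distrib scaleR_add_right)
  show "Bmap Q \<pi> (c *\<^sub>R x) = c *\<^sub>R Bmap Q \<pi> x"
    unfolding Bmap_def by (simp add: scaleR_sum_right mult_ac)
qed

lemma inner_double_sum:
  fixes f :: "'a \<Rightarrow> real^'n"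
  shows "(\<Sum>r\<in>Q. a r *\<^sub>R f r) \<bullet> (\<Sum>s\<in>Q. b s *\<^sub>R f s) = (\<Sum>r\<in>Q. \<Sum>s\<in>Q. a r * b s * (f r \<bullet> f s))"
  apply (subst inner_sum_left)
  apply (subst inner_sum_right)
  apply (simp add: sum_distrib_left mult_ac)
  done


lemma simplex_perm_sum:
  fixes Q :: "(real^'n) set"
  assumes Q: "regular_simplex_vertices Q" and p: "\<pi> permutes Q"
  shows "(\<Sum>r\<in>Q. \<pi> r) = 0"
proof -
  have "(\<Sum>r\<in>Q. \<pi> r) = (\<Sum>r\<in>Q. r)"
    using sum.permute[OF p, of "\<lambda>r. r"] by (simp add: comp_def)
  then show ?thesis using simplex_sum_zero[OF Q] by simp
qed

lemma Bmap_Q: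
  fixes Q :: "(real^'n) set"
  assumes Q: "regular_simplex_vertices Q" and p: "\<pi> permutes Q" and q: "q \<in> Q"
  shows "Bmap Q \<pi> q = \<pi> q"
proof -
  note B = simplex_basic[OF Q]
  have "(\<Sum>r\<in>Q. (r \<bullet> q) *\<^sub>R \<pi> r) = (q \<bullet> q) *\<^sub>R \<pi> q + (\<Sum>r\<in>Q - {q}. (r \<bullet> q) *\<^sub>R \<pi> r)"
    using B(1) q by (simp add: sum.remove)
  also have "(\<Sum>r\<in>Q - {q}. (r \<bullet> q) *\<^sub>R \<pi> r) = (- 1 / real CARD('n)) *\<^sub>R (\<Sum>r\<in>Q - {q}. \<pi> r)"
    unfolding scaleR_sum_right using B(4) q by (intro sum.cong) auto
  also have "(\<Sum>r\<in>Q - {q}. \<pi> r) = (\<Sum>r\<in>Q. \<pi> r) - \<pi> q"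
    using B(1) q by (simp add: sum.remove)
  also have "\<dots> = - \<pi> q" by (simp add: simplex_perm_sum[OF Q p])
  finally have "(\<Sum>r\<in>Q. (r \<bullet> q) *\<^sub>R \<pi> r) = (1 + 1 / real CARD('n)) *\<^sub>R \<pi> q"
    using B(5)[OF q] by (simp add: algebra_simps)
  then show ?thesis unfolding Bmap_def using card_real_pos[where 'n='n] by (simp add: field_simps)
qed

lemma simplex_expand:
  fixes Q :: "(real^'n) set"
  assumes Q: "regular_simplex_vertices Q"
  shows "z = (real CARD('n) / (real CARD('n) + 1)) *\<^sub>R (\<Sum>q\<in>Q. (z \<bullet> q) *\<^sub>R q)"
  using card_real_pos[where 'n='n] by (simp add: simplex_tight[OF Q] field_simps)

lemma linear_eq_on_simplex:
  fixes Q :: "(real^'n) set"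
  assumes Q: "regular_simplex_vertices Q" and f: "linear f" and g: "linear g"
    and eq: "\<And>q. q \<in> Q \<Longrightarrow> f q = g q"
  shows "f z = g z"
proof -
  let ?c = "real CARD('n) / (real CARD('n) + 1)"
  have "f z = f (?c *\<^sub>R (\<Sum>q\<in>Q. (z \<bullet> q) *\<^sub>R q))" using simplex_expand[OF Q] by metis
  also have "\<dots> = ?c *\<^sub>R (\<Sum>q\<in>Q. (z \<bullet> q) *\<^sub>R f q)"
    by (simp add: linear_scale[OF f] linear_sum[OF f])
  also have "\<dots> = ?c *\<^sub>R (\<Sum>q\<in>Q. (z \<bullet> q) *\<^sub>R g q)" using eq by simp
  also have "\<dots> = g (?c *\<^sub>R (\<Sum>q\<in>Q. (z \<bullet> q) *\<^sub>R q))"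
    by (simp add: linear_scale[OF g] linear_sum[OF g])
  also have "\<dots> = g z" using simplex_expand[OF Q] by metis
  finally show ?thesis .
qed

lemma Bmap_inner:
  fixes Q :: "(real^'n) set"
  assumes Q: "regular_simplex_vertices Q" and p: "\<pi> permutes Q"
  shows "Bmap Q \<pi> z \<bullet> Bmap Q \<pi> w = z \<bullet> w"
proof -
  note B = simplex_basic[OF Q]
  let ?c = "real CARD('n) / (real CARD('n) + 1)"
  have pin: "\<pi> r \<bullet> \<pi> s = r \<bullet> s" if "r \<in> Q" "s \<in> Q" for r s
  proof (cases "r = s")
    case True
    then show ?thesis using B(5) that permutes_in_image[OF p] by simp
  next
    case False
    then have "\<pi> r \<noteq> \<pi> s" using permutes_inj[OF p] by (auto dest: injD)
    then show ?thesis using B(4) that False permutes_in_image[OF p] by simp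
  qed
  have "Bmap Q \<pi> z \<bullet> Bmap Q \<pi> w = ?c * ?c * (\<Sum>r\<in>Q. \<Sum>s\<in>Q. (r \<bullet> z) * (s \<bullet> w) * (\<pi> r \<bullet> \<pi> s))"
    unfolding Bmap_def by (simp only: inner_scaleR_left inner_scaleR_right inner_double_sum mult.assoc)
  also have "\<dots> = ?c * ?c * (\<Sum>r\<in>Q. \<Sum>s\<in>Q. (r \<bullet> z) * (s \<bullet> w) * (r \<bullet> s))"
    using pin by (intro arg_cong[where f="\<lambda>t. ?c * ?c * t"] sum.cong) auto
  also have "\<dots> = ?c * ?c * ((\<Sum>r\<in>Q. (z \<bullet> r) *\<^sub>R r) \<bullet> (\<Sum>s\<in>Q. (w \<bullet> s) *\<^sub>R s))"
  proof -
    have "(\<Sum>r\<in>Q. (z \<bullet> r) *\<^sub>R r) \<bullet> (\<Sum>s\<in>Q. (w \<bullet> s) *\<^sub>R s) = (\<Sum>r\<in>Q. \<Sum>s\<in>Q. (z \<bullet> r) * (w \<bullet> s) * (r \<bullet> s))"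
      by (rule inner_double_sum)
    also have "\<dots> = (\<Sum>r\<in>Q. \<Sum>s\<in>Q. (r \<bullet> z) * (s \<bullet> w) * (r \<bullet> s))"
      by (simp add: inner_commute)
    finally show ?thesis by simp
  qed
  also have "\<dots> = z \<bullet> w"
  proof -
    have h: "?c * ((real CARD('n) + 1) / real CARD('n)) = 1" using card_real_pos[where 'n='n] by simp
    let ?k = "(real CARD('n) + 1) / real CARD('n)"
    have t: "(\<Sum>r\<in>Q. (z \<bullet> r) *\<^sub>R r) \<bullet> (\<Sum>s\<in>Q. (w \<bullet> s) *\<^sub>R s) = ?k * ?k * (z \<bullet> w)"
      unfolding simplex_tight[OF Q] by simp
    have "?c * ?c * (?k * ?k * (z \<bullet> w)) = (?c * ?k) * (?c * ?k) * (z \<bullet> w)"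
      by (simp only: mult_ac)
    then show ?thesis using h t by simp
  qed
  finally show ?thesis .
qed

lemma orth_Bmap:
  fixes Q :: "(real^'n) set"
  assumes Q: "regular_simplex_vertices Q" and p: "\<pi> permutes Q"
  shows "orthogonal_transformation (Bmap Q \<pi>)"
  unfolding orthogonal_transformation_def using linear_Bmap Bmap_inner[OF Q p] by blast

lemma Bmap_compose:
  fixes Q :: "(real^'n) set"
  assumes Q: "regular_simplex_vertices Q" and p: "\<pi> permutes Q" and s: "\<sigma> permutes Q"
  shows "Bmap Q (\<pi> \<circ> \<sigma>) = Bmap Q \<pi> \<circ> Bmap Q \<sigma>"
proof
  fix z
  show "Bmap Q (\<pi> \<circ> \<sigma>) z = (Bmap Q \<pi> \<circ> Bmap Q \<sigma>) z"
  proof (rule linear_eq_on_simplex[OF Q linear_Bmap])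
    show "linear (Bmap Q \<pi> \<circ> Bmap Q \<sigma>)" using linear_Bmap by (rule linear_compose) (rule linear_Bmap)
    fix q assume q: "q \<in> Q"
    show "Bmap Q (\<pi> \<circ> \<sigma>) q = (Bmap Q \<pi> \<circ> Bmap Q \<sigma>) q"
      using Bmap_Q[OF Q permutes_compose[OF s p] q] Bmap_Q[OF Q s q] Bmap_Q[OF Q p] q
        permutes_in_image[OF s] by simp
  qed
qed

lemma det_rank1_axis:
  fixes i :: "'n::finite"
  shows "det (matrix (\<lambda>z::real^'n. z + (\<alpha> * (z \<bullet> axis i 1)) *\<^sub>R axis i 1)) = 1 + \<alpha>"
proof -
  let ?M = "matrix (\<lambda>z::real^'n. z + (\<alpha> * (z \<bullet> axis i 1)) *\<^sub>R axis i 1)"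
  have M: "?M $ k $ l = (if k = l then (if k = i then 1 + \<alpha> else 1) else 0)" for k l
    unfolding matrix_def by (simp add: inner_axis) (auto simp: axis_def)
  have "det ?M = prod (\<lambda>k. ?M $ k $ k) UNIV"
    by (rule det_diagonal) (simp add: M)
  also have "\<dots> = prod (\<lambda>k. if k = i then 1 + \<alpha> else 1) UNIV" by (simp add: M)
  also have "\<dots> = 1 + \<alpha>" by (simp add: prod.If_cases)
  finally show ?thesis .
qed

lemma det_rank1:
  fixes e :: "real^'n"
  assumes e: "norm e = 1"
  shows "det (matrix (\<lambda>z. z + (\<alpha> * (z \<bullet> e)) *\<^sub>R e)) = 1 + \<alpha>"
proof -
  obtain i :: 'n where True by blast
  let ?b = "axis i (1::real) :: real^'n"
  have nb: "norm ?b = norm e" using e by simp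
  obtain Ot where Ot: "orthogonal_transformation Ot" "Ot ?b = e"
    using orthogonal_transformation_exists[OF nb] by blast
  define f where "f = (\<lambda>z. z + (\<alpha> * (z \<bullet> e)) *\<^sub>R e)"
  define D where "D = (\<lambda>z::real^'n. z + (\<alpha> * (z \<bullet> ?b)) *\<^sub>R ?b)"
  have lf: "linear f" unfolding f_def
    by (rule linearI) (simp_all add: inner_add_left algebra_simps scaleR_add_left)
  have lD: "linear D" unfolding D_def
    by (rule linearI) (simp_all add: inner_add_left algebra_simps scaleR_add_left)
  have lO: "linear Ot" using Ot(1) orthogonal_transformation_linear by blast
  have comm: "f \<circ> Ot = Ot \<circ> D"
  proof
    fix z
    have "Ot z \<bullet> Ot ?b = z \<bullet> ?b" using Ot(1) unfolding orthogonal_transformation_def by blast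
    then show "(f \<circ> Ot) z = (Ot \<circ> D) z"
      unfolding f_def D_def comp_def using Ot(2) by (simp add: linear_add[OF lO] linear_scale[OF lO])
  qed
  have "det (matrix f) * det (matrix Ot) = det (matrix Ot) * det (matrix D)"
    by (metis comm det_mul matrix_compose lf lO lD mult.commute)
  moreover have "det (matrix Ot) \<noteq> 0" using orthogonal_transformation_det[OF Ot(1)] by auto
  ultimately have "det (matrix f) = det (matrix D)" by simp
  also have "\<dots> = 1 + \<alpha>" unfolding D_def by (rule det_rank1_axis)
  finally show ?thesis unfolding f_def .
qed

lemma linear_refl_gen: "linear (\<lambda>z::'a::real_inner. z - (c * (z \<bullet> d)) *\<^sub>R d)"
  by (rule linearI) (simp_all add: inner_add_left algebra_simps scaleR_add_left)

lemma Bmap_transpose: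
  fixes Q :: "(real^'n) set"
  assumes Q: "regular_simplex_vertices Q" and r: "r \<in> Q" and s: "s \<in> Q" and rs: "r \<noteq> s"
  shows "Bmap Q (Transposition.transpose r s) z = z - ((real CARD('n) / (real CARD('n) + 1)) * (z \<bullet> (r - s))) *\<^sub>R (r - s)"
proof (rule linear_eq_on_simplex[OF Q linear_Bmap])
  note B = simplex_basic[OF Q]
  let ?c = "real CARD('n) / (real CARD('n) + 1)"
  show "linear (\<lambda>z. z - (?c * (z \<bullet> (r - s))) *\<^sub>R (r - s))"
    by (rule linear_refl_gen)
  fix q assume q: "q \<in> Q"
  have lhs: "Bmap Q (Transposition.transpose r s) q = Transposition.transpose r s q"
    by (rule Bmap_Q[OF Q permutes_swap_id[OF r s] q])
  have hc: "?c * (1 + 1 / real CARD('n)) = 1" using card_real_pos[where 'n='n] by (simp add: field_simps)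
  show "Bmap Q (Transposition.transpose r s) q = q - (?c * (q \<bullet> (r - s))) *\<^sub>R (r - s)"
  proof (cases "q = r")
    case True
    have "q \<bullet> (r - s) = 1 + 1 / real CARD('n)" using True B(4)[OF r s rs] B(5)[OF r] by (simp add: inner_diff_right)
    then have "?c * (q \<bullet> (r - s)) = 1" by (simp only: hc)
    then have "q - (?c * (q \<bullet> (r - s))) *\<^sub>R (r - s) = q - (r - s)" by (simp only: scaleR_one)
    then show ?thesis using lhs True by simp
  next
    case qr: False
    show ?thesis
    proof (cases "q = s")
      case True
      have "q \<bullet> (r - s) = - (1 + 1 / real CARD('n))" using True B(4)[OF s r] rs B(5)[OF s] by (simp add: inner_diff_right)
      then have "?c * (q \<bullet> (r - s)) = -1" by (simp only: hc mult_minus_right)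
      then have "q - (?c * (q \<bullet> (r - s))) *\<^sub>R (r - s) = q + (r - s)" by simp
      then show ?thesis using lhs True qr rs by simp
    next
      case False
      have "q \<bullet> (r - s) = 0" using False qr B(4)[OF q r] B(4)[OF q s] by (simp add: inner_diff_right)
      then show ?thesis using lhs False qr by simp
    qed
  qed
qed

lemma det_Bmap_transpose:
  fixes Q :: "(real^'n) set"
  assumes Q: "regular_simplex_vertices Q" and r: "r \<in> Q" and s: "s \<in> Q" and rs: "r \<noteq> s"
  shows "det (matrix (Bmap Q (Transposition.transpose r s))) = -1"
proof -
  note B = simplex_basic[OF Q]
  let ?c = "real CARD('n) / (real CARD('n) + 1)"
  define d where "d = r - s"
  have dd: "d \<bullet> d = 2 + 2 / real CARD('n)"
    using B(4)[OF r s rs] B(4)[OF s r] rs B(5)[OF r] B(5)[OF s]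
    by (simp add: d_def inner_diff_left inner_diff_right)
  have "0 < 2 + 2 / real CARD('n)" using card_real_pos[where 'n='n] by (simp add: add_pos_pos)
  then have d0: "norm d > 0" using dd by (auto simp: norm_eq_sqrt_inner)
  define e where "e = d /\<^sub>R norm d"
  have ne: "norm e = 1" using d0 by (simp add: e_def)
  have nd2: "norm d * norm d = d \<bullet> d" by (simp add: norm_eq_sqrt_inner)
  have eq: "Bmap Q (Transposition.transpose r s) = (\<lambda>z. z + (- 2 * (z \<bullet> e)) *\<^sub>R e)"
  proof
    fix z
    have ee: "(z \<bullet> e) *\<^sub>R e = ((z \<bullet> d) / (d \<bullet> d)) *\<^sub>R d"
      using d0 by (simp add: e_def nd2[symmetric] divide_inverse mult_ac)
    have dd0: "d \<bullet> d \<noteq> 0" using d0 nd2 by auto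
    have "(?c * (z \<bullet> d)) *\<^sub>R d = (?c * (d \<bullet> d)) *\<^sub>R ((z \<bullet> e) *\<^sub>R e)"
      unfolding ee using dd0 by simp
    also have "\<dots> = (?c * (d \<bullet> d) * (z \<bullet> e)) *\<^sub>R e" by simp
    also have "?c * (d \<bullet> d) = 2" unfolding dd using card_real_pos[where 'n='n] by (simp add: field_simps)
    finally show "Bmap Q (Transposition.transpose r s) z = z + (- 2 * (z \<bullet> e)) *\<^sub>R e"
      using Bmap_transpose[OF Q r s rs, of z] by (simp add: d_def)
  qed
  show ?thesis unfolding eq using det_rank1[OF ne, of "-2"] by simp
qed

lemma swap_sum:
  fixes a g :: "'a \<Rightarrow> real"
  assumes fin: "finite Q" and r: "r \<in> Q" and s: "s \<in> Q" and rs: "r \<noteq> s"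
  shows "(\<Sum>t\<in>Q. a t * g (Transposition.transpose r s t)) = (\<Sum>t\<in>Q. a t * g t) - (a r - a s) * (g r - g s)"
proof -
  let ?h = "\<lambda>t. a t * g (Transposition.transpose r s t) - a t * g t"
  have "(\<Sum>t\<in>Q. ?h t) = (\<Sum>t\<in>{r,s}. ?h t)"
    using fin r s by (intro sum.mono_neutral_right) (auto simp: Transposition.transpose_def)
  also have "\<dots> = - (a r - a s) * (g r - g s)"
    using rs by (simp add: Transposition.transpose_def algebra_simps)
  finally have "(\<Sum>t\<in>Q. a t * g (Transposition.transpose r s t)) - (\<Sum>t\<in>Q. a t * g t) = - (a r - a s) * (g r - g s)"
    by (simp only: sum_subtractf)
  then show ?thesis by (simp add: algebra_simps)
qed

lemma double_sum_pairs:
  fixes a g :: "'a \<Rightarrow> real"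
  assumes fin: "finite Q"
  shows "(\<Sum>r\<in>Q. \<Sum>s\<in>Q. (a r - a s) * (g r - g s)) =
     2 * real (card Q) * (\<Sum>r\<in>Q. a r * g r) - 2 * (\<Sum>r\<in>Q. a r) * (\<Sum>r\<in>Q. g r)"
proof -
  have e: "(a r - a s) * (g r - g s) = a r * g r + a s * g s - a r * g s - a s * g r" for r s
    by (simp add: algebra_simps)
  have s1: "(\<Sum>r\<in>Q. \<Sum>s\<in>Q. a r * g r) = real (card Q) * (\<Sum>r\<in>Q. a r * g r)"
    by (simp add: sum_distrib_left mult.commute)
  have s2: "(\<Sum>r\<in>Q. \<Sum>s\<in>Q. a s * g s) = real (card Q) * (\<Sum>r\<in>Q. a r * g r)"
    by simp
  have s3: "(\<Sum>r\<in>Q. \<Sum>s\<in>Q. a r * g s) = (\<Sum>r\<in>Q. a r) * (\<Sum>r\<in>Q. g r)"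
    by (simp add: sum_product)
  have s4: "(\<Sum>r\<in>Q. \<Sum>s\<in>Q. a s * g r) = (\<Sum>r\<in>Q. a r) * (\<Sum>r\<in>Q. g r)"
    by (subst sum.swap) (simp add: sum_product mult.commute)
  show ?thesis
    unfolding e sum_subtractf sum.distrib s1 s2 s3 s4 by simp
qed

lemma three_contra:
  fixes d1 d2 e1 e2 V :: real
  assumes "d1 * e1 = V" "d2 * e2 = V" "(d1 + d2) * (e1 + e2) = V" "V > 0"
  shows False
proof -
  have h: "d1 * e2 + d2 * e1 = - V" using assms(1-3) by (simp add: algebra_simps)
  have "d1 * d2 * (d1 * e2 + d2 * e1) = d1 * d1 * (d2 * e2) + d2 * d2 * (d1 * e1)" by (simp add: algebra_simps)
  then have "- V * (d1 * d2) = V * (d1 * d1 + d2 * d2)" using h assms(1,2) by (simp add: algebra_simps)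
  then have "V * (d1 * d1 + d1 * d2 + d2 * d2) = 0" by (simp add: algebra_simps)
  then have z: "d1 * d1 + d1 * d2 + d2 * d2 = 0" using assms(4) by simp
  have "(2 * d1 + d2)^2 + 3 * d2^2 = 4 * (d1 * d1 + d1 * d2 + d2 * d2)" by (simp add: power2_eq_square algebra_simps)
  then have "(2 * d1 + d2)^2 + 3 * d2^2 = 0" using z by simp
  then have "d2 = 0" by (smt (verit) zero_le_power2 power2_eq_square mult_eq_0_iff)
  then show False using assms(2,4) by simp
qed



lemma Bmap_inner_V:
  fixes Q :: "(real^'n) set"
  shows "Bmap Q \<pi> x \<bullet> y = (real CARD('n) / (real CARD('n) + 1)) * (\<Sum>r\<in>Q. (r \<bullet> x) * (\<pi> r \<bullet> y))"
  unfolding Bmap_def by (simp add: inner_sum_left)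

lemma det_Bmap_pm1:
  fixes Q :: "(real^'n) set"
  assumes Q: "regular_simplex_vertices Q" and p: "\<pi> permutes Q"
  shows "det (matrix (Bmap Q \<pi>)) = 1 \<or> det (matrix (Bmap Q \<pi>)) = -1"
  using orthogonal_transformation_det[OF orth_Bmap[OF Q p]] by linarith

lemma exists_pos_perm:
  fixes Q :: "(real^'n) set"
  assumes Q: "regular_simplex_vertices Q" and N2: "CARD('n) \<ge> 2"
    and x0: "x \<noteq> 0" and y0: "y \<noteq> 0"
  shows "\<exists>\<pi>. \<pi> permutes Q \<and> det (matrix (Bmap Q \<pi>)) = 1 \<and> Bmap Q \<pi> x \<bullet> y > 0"
proof -
  note B = simplex_basic[OF Q]
  define a where "a r = r \<bullet> x" for r
  define V where "V \<pi> = (\<Sum>r\<in>Q. a r * (\<pi> r \<bullet> y))" for \<pi> :: "real^'n \<Rightarrow> real^'n"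
  let ?c = "real CARD('n) / (real CARD('n) + 1)"
  have cpos: "?c > 0" using card_real_pos[where 'n='n] by simp
  have BV: "Bmap Q \<pi> x \<bullet> y = ?c * V \<pi>" for \<pi>
    unfolding Bmap_inner_V V_def a_def ..
  define P where "P = {\<pi>. \<pi> permutes Q}"
  have finP: "finite P" unfolding P_def using finite_permutations[OF B(1)] .
  have idP: "id \<in> P" unfolding P_def by (simp add: permutes_id)
  define M where "M = Max (V ` P)"
  have "M \<in> V ` P" unfolding M_def using finP idP by (intro Max_in) auto
  then obtain \<pi>0 where p0P: "\<pi>0 \<in> P" and M0: "V \<pi>0 = M" by auto
  have p0: "\<pi>0 permutes Q" using p0P by (simp add: P_def)
  have maxV: "V \<pi> \<le> V \<pi>0" if "\<pi> permutes Q" for \<pi>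
    unfolding M0 M_def using finP that by (intro Max_ge) (auto simp: P_def)
  define g where "g t = \<pi>0 t \<bullet> y" for t
  define Pr where "Pr r s = (a r - a s) * (g r - g s)" for r s
  define V0 where "V0 = V \<pi>0"
  have V0g: "V0 = (\<Sum>t\<in>Q. a t * g t)" by (simp add: V0_def V_def g_def)
  have Vswap: "V (\<pi>0 \<circ> Transposition.transpose r s) = V0 - Pr r s"
    if r: "r \<in> Q" and s: "s \<in> Q" and rs: "r \<noteq> s" for r s
    using swap_sum[OF B(1) r s rs, of a g] unfolding V_def V0g Pr_def g_def by simp
  have pswap: "\<pi>0 \<circ> Transposition.transpose r s permutes Q" if "r \<in> Q" "s \<in> Q" for r s
    by (rule permutes_compose[OF permutes_swap_id[OF that] p0])
  have Prnn: "Pr r s \<ge> 0" if r: "r \<in> Q" and s: "s \<in> Q" for r s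
  proof (cases "r = s")
    case True then show ?thesis by (simp add: Pr_def)
  next
    case False
    have "V (\<pi>0 \<circ> Transposition.transpose r s) \<le> V \<pi>0" by (rule maxV[OF pswap[OF r s]])
    then show ?thesis using Vswap[OF r s False] by (simp add: V0_def)
  qed
  have suma: "(\<Sum>r\<in>Q. a r) = 0"
    unfolding a_def using simplex_sum_zero[OF Q] by (simp add: inner_sum_left[symmetric])
  have sumg: "(\<Sum>r\<in>Q. g r) = 0"
    unfolding g_def using simplex_perm_sum[OF Q p0] by (simp add: inner_sum_left[symmetric])
  have dsum: "(\<Sum>r\<in>Q. \<Sum>s\<in>Q. Pr r s) = 2 * real (card Q) * V0"
    unfolding Pr_def V0g double_sum_pairs[OF B(1)] suma sumg by simp
  have cardQ: "real (card Q) = real CARD('n) + 1" using B(2) by simp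
  have V0nn: "V0 \<ge> 0"
  proof -
    have "(\<Sum>r\<in>Q. \<Sum>s\<in>Q. Pr r s) \<ge> 0" using Prnn by (intro sum_nonneg) auto
    then show ?thesis using dsum cardQ by (simp add: zero_le_mult_iff)
  qed
  have V0pos: "V0 > 0"
  proof (rule ccontr)
    assume "\<not> V0 > 0"
    then have V00: "V0 = 0" using V0nn by simp
    have Pr0: "Pr r s = 0" if r: "r \<in> Q" and s: "s \<in> Q" for r s
    proof -
      have tot0: "(\<Sum>r\<in>Q. \<Sum>s\<in>Q. Pr r s) = 0" using dsum V00 by simp
      have rnn: "\<And>r. r \<in> Q \<Longrightarrow> 0 \<le> (\<Sum>s\<in>Q. Pr r s)" using Prnn by (auto intro: sum_nonneg)
      have "\<forall>r\<in>Q. (\<Sum>s\<in>Q. Pr r s) = 0"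
        using iffD1[OF sum_nonneg_eq_0_iff[OF B(1) rnn] tot0] .
      then have row0: "(\<Sum>s\<in>Q. Pr r s) = 0" using r by auto
      have snn: "\<And>s. s \<in> Q \<Longrightarrow> 0 \<le> Pr r s" using Prnn r by auto
      have "\<forall>s\<in>Q. Pr r s = 0" using iffD1[OF sum_nonneg_eq_0_iff[OF B(1) snn] row0] .
      then show ?thesis using s by auto
    qed
    have "\<exists>r0\<in>Q. \<exists>s0\<in>Q. g r0 \<noteq> g s0"
    proof (rule ccontr)
      assume "\<not> ?thesis"
      then have gc: "\<And>r s. r \<in> Q \<Longrightarrow> s \<in> Q \<Longrightarrow> g r = g s" by blast
      have "Q \<noteq> {}" using B(2) by (intro notI) simp
      then obtain q0 where q0: "q0 \<in> Q" by auto
      have "(\<Sum>r\<in>Q. g r) = (\<Sum>r\<in>Q. g q0)"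
      proof (rule sum.cong[OF refl])
        fix r assume "r \<in> Q" then show "g r = g q0" by (rule gc[OF _ q0])
      qed
      then have "real (card Q) * g q0 = 0" using sumg by simp
      then have gq0: "g q0 = 0" using cardQ by simp
      have "y = 0"
      proof (rule simplex_perp_zero[OF Q])
        fix q assume q: "q \<in> Q"
        define t where "t = inv \<pi>0 q"
        have t: "t \<in> Q" "\<pi>0 t = q"
          unfolding t_def using q permutes_in_image[OF permutes_inv[OF p0]] permutes_inverses(1)[OF p0] by auto
        have "g t = 0" using gc[OF t(1) q0] gq0 by (simp only:)
        then show "y \<bullet> q = 0" using t by (simp add: g_def inner_commute)
      qed
      then show False using y0 by simp
    qed
    then obtain r0 s0 where r0: "r0 \<in> Q" and s0: "s0 \<in> Q" and gne: "g r0 \<noteq> g s0" by auto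
    have ar: "a r0 = a s0" using Pr0[OF r0 s0] gne by (simp add: Pr_def)
    have ac: "a k = a r0" if k: "k \<in> Q" for k
    proof (rule ccontr)
      assume ne: "a k \<noteq> a r0"
      have "g k = g r0" using Pr0[OF k r0] ne by (simp add: Pr_def)
      moreover have "g k = g s0" using Pr0[OF k s0] ne ar by (simp add: Pr_def)
      ultimately show False using gne by simp
    qed
    have "(\<Sum>r\<in>Q. a r) = (\<Sum>r\<in>Q. a r0)"
    proof (rule sum.cong[OF refl])
      fix r assume "r \<in> Q" then show "a r = a r0" by (rule ac)
    qed
    then have "real (card Q) * a r0 = 0" using suma by simp
    then have ar0: "a r0 = 0" using cardQ by simp
    have "x = 0"
    proof (rule simplex_perp_zero[OF Q])
      fix q assume q: "q \<in> Q"
      show "x \<bullet> q = 0" using ac[OF q] ar0 by (simp add: a_def inner_commute)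
    qed
    then show False using x0 by simp
  qed
  have "\<exists>r\<in>Q. \<exists>s\<in>Q. r \<noteq> s \<and> Pr r s < V0"
  proof (rule ccontr)
    assume "\<not> ?thesis"
    then have ge: "\<And>r s. r \<in> Q \<Longrightarrow> s \<in> Q \<Longrightarrow> r \<noteq> s \<Longrightarrow> Pr r s \<ge> V0" by (meson not_less)
    have row: "(\<Sum>s\<in>Q. Pr r s) = (\<Sum>s\<in>Q - {r}. Pr r s)" if r: "r \<in> Q" for r
      using B(1) r by (simp add: sum.remove Pr_def)
    have rowge: "(\<Sum>s\<in>Q - {r}. Pr r s) \<ge> (\<Sum>s\<in>Q - {r}. V0)" if r: "r \<in> Q" for r
      using ge r by (intro sum_mono) auto
    have cQr: "real (card (Q - {r})) = real CARD('n)" if r: "r \<in> Q" for r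
      using B(1,2) r by (simp add: card_Diff_singleton)
    have rowsum: "(\<Sum>r\<in>Q. \<Sum>s\<in>Q. Pr r s) = (\<Sum>r\<in>Q. \<Sum>s\<in>Q - {r}. Pr r s)"
    proof (rule sum.cong[OF refl])
      fix r assume "r \<in> Q" then show "(\<Sum>s\<in>Q. Pr r s) = (\<Sum>s\<in>Q - {r}. Pr r s)" by (rule row)
    qed
    then have "(\<Sum>r\<in>Q. \<Sum>s\<in>Q. Pr r s) = (\<Sum>r\<in>Q. \<Sum>s\<in>Q - {r}. Pr r s)" .
    also have "\<dots> \<ge> (\<Sum>r\<in>Q. \<Sum>s\<in>Q - {r}. V0)" by (rule sum_mono) (rule rowge)
    finally have "(\<Sum>r\<in>Q. \<Sum>s\<in>Q - {r}. V0) \<le> 2 * real (card Q) * V0" using dsum by simp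
    also have "(\<Sum>r\<in>Q. \<Sum>s\<in>Q - {r}. V0) = (\<Sum>r\<in>Q. real CARD('n) * V0)"
      using cQr by (intro sum.cong) auto
    finally have "real (card Q) * (real CARD('n) * V0) \<le> 2 * real (card Q) * V0" by simp
    then have "(real CARD('n) + 1) * (real CARD('n) * V0) \<le> (real CARD('n) + 1) * (2 * V0)"
      using cardQ by (simp add: algebra_simps)
    then have "real CARD('n) * V0 \<le> 2 * V0"
      using mult_le_cancel_left_pos[of "real CARD('n) + 1"] card_real_pos[where 'n='n] by simp
    then have "real CARD('n) \<le> 2" using V0pos by simp
    then have N2e: "CARD('n) = 2" using N2 by simp
    then have c3: "card Q = 3" using B(2) by simp
    then obtain r1 r2 r3 where Q3: "Q = {r1, r2, r3}" and d: "r1 \<noteq> r2" "r2 \<noteq> r3" "r1 \<noteq> r3"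
      by (auto simp: card_3_iff)
    have tot: "(\<Sum>r\<in>Q. \<Sum>s\<in>Q - {r}. Pr r s - V0) = 0"
    proof -
      have "(\<Sum>r\<in>Q. \<Sum>s\<in>Q - {r}. Pr r s - V0) = (\<Sum>r\<in>Q. \<Sum>s\<in>Q - {r}. Pr r s) - (\<Sum>r\<in>Q. \<Sum>s\<in>Q - {r}. V0)"
        by (simp add: sum_subtractf)
      also have "(\<Sum>r\<in>Q. \<Sum>s\<in>Q - {r}. Pr r s) = 2 * real (card Q) * V0"
        using dsum rowsum by simp
      also have "(\<Sum>r\<in>Q. \<Sum>s\<in>Q - {r}. V0) = (\<Sum>r\<in>Q. real CARD('n) * V0)"
        using cQr by (intro sum.cong) auto
      finally show ?thesis using N2e c3 by simp
    qed
    have eqV: "Pr r s = V0" if r: "r \<in> Q" and s: "s \<in> Q" and rs: "r \<noteq> s" for r s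
    proof -
      have nn: "\<And>r s. r \<in> Q \<Longrightarrow> s \<in> Q - {r} \<Longrightarrow> Pr r s - V0 \<ge> 0" using ge by auto
      have rnn: "\<And>r. r \<in> Q \<Longrightarrow> 0 \<le> (\<Sum>s\<in>Q - {r}. Pr r s - V0)" using nn by (meson sum_nonneg)
      have "\<forall>r\<in>Q. (\<Sum>s\<in>Q - {r}. Pr r s - V0) = 0"
        using iffD1[OF sum_nonneg_eq_0_iff[OF B(1) rnn] tot] .
      then have row0: "(\<Sum>s\<in>Q - {r}. Pr r s - V0) = 0" using r by auto
      have snn: "\<And>s. s \<in> Q - {r} \<Longrightarrow> 0 \<le> Pr r s - V0" using nn r by auto
      have fr: "finite (Q - {r})" using B(1) by simp
      have "\<forall>s\<in>Q - {r}. Pr r s - V0 = 0" using iffD1[OF sum_nonneg_eq_0_iff[OF fr snn] row0] .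
      then show ?thesis using s rs by auto
    qed
    have e12: "Pr r1 r2 = V0" and e23: "Pr r2 r3 = V0" and e13: "Pr r1 r3 = V0"
      using eqV d Q3 by auto
    show False
      using three_contra[of "a r1 - a r2" "g r1 - g r2" V0 "a r2 - a r3" "g r2 - g r3"] e12 e23 e13 V0pos
      by (simp add: Pr_def)
  qed
  then obtain r s where r: "r \<in> Q" and s: "s \<in> Q" and rs: "r \<noteq> s" and lt: "Pr r s < V0" by auto
  define \<pi>1 where "\<pi>1 = \<pi>0 \<circ> Transposition.transpose r s"
  have p1: "\<pi>1 permutes Q" unfolding \<pi>1_def by (rule pswap[OF r s])
  have V1: "V \<pi>1 > 0" unfolding \<pi>1_def using Vswap[OF r s rs] lt by simp
  have detc: "det (matrix (Bmap Q \<pi>1)) = - det (matrix (Bmap Q \<pi>0))"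
  proof -
    have "Bmap Q \<pi>1 = Bmap Q \<pi>0 \<circ> Bmap Q (Transposition.transpose r s)"
      unfolding \<pi>1_def by (rule Bmap_compose[OF Q p0 permutes_swap_id[OF r s]])
    then have "matrix (Bmap Q \<pi>1) = matrix (Bmap Q \<pi>0) ** matrix (Bmap Q (Transposition.transpose r s))"
      by (simp add: matrix_compose linear_Bmap)
    then show ?thesis using det_Bmap_transpose[OF Q r s rs] by (simp add: det_mul)
  qed
  show ?thesis
  proof (cases "det (matrix (Bmap Q \<pi>0)) = 1")
    case True
    then show ?thesis using p0 BV[of \<pi>0] V0pos cpos by (intro exI[of _ \<pi>0]) (simp add: V0_def)
  next
    case False
    then have "det (matrix (Bmap Q \<pi>0)) = -1" using det_Bmap_pm1[OF Q p0] by simp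
    then show ?thesis using p1 BV[of \<pi>1] V1 cpos detc by (intro exI[of _ \<pi>1]) simp
  qed
qed



definition rotF :: "(real^'n) set \<Rightarrow> (real^'n^'n) set" where
  "rotF Q = (\<lambda>\<pi>. matrix (Bmap Q \<pi>)) ` {\<pi>. \<pi> permutes Q \<and> det (matrix (Bmap Q \<pi>)) = 1}"

lemma rotF_finite:
  fixes Q :: "(real^'n) set"
  assumes Q: "regular_simplex_vertices Q"
  shows "finite (rotF Q)"
proof -
  have "finite {\<pi>. \<pi> permutes Q}" using finite_permutations simplex_basic(1)[OF Q] by blast
  then have "finite {\<pi>. \<pi> permutes Q \<and> det (matrix (Bmap Q \<pi>)) = 1}" by (rule rev_finite_subset) auto
  then show ?thesis unfolding rotF_def by simp
qed

lemma rotF_sub: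
  fixes Q :: "(real^'n) set"
  assumes Q: "regular_simplex_vertices Q" and A: "A \<in> rotF Q"
  shows "A \<in> simplex_rotations Q"
proof -
  obtain \<pi> where p: "\<pi> permutes Q" and d: "det (matrix (Bmap Q \<pi>)) = 1" and A: "A = matrix (Bmap Q \<pi>)"
    using A unfolding rotF_def by auto
  have om: "orthogonal_matrix A"
    using orth_Bmap[OF Q p] unfolding A orthogonal_transformation_matrix by blast
  have Av: "A *v x = Bmap Q \<pi> x" for x unfolding A by (simp add: matrix_works linear_Bmap)
  have "(\<lambda>x. A *v x) ` Q = \<pi> ` Q" unfolding Av using Bmap_Q[OF Q p] by (auto simp: image_def)
  also have "\<dots> = Q" by (rule permutes_image[OF p])
  finally show ?thesis unfolding simplex_rotations_def rotation_matrix_def using om d A by simp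
qed

lemma rotF_pos:
  fixes Q :: "(real^'n) set"
  assumes Q: "regular_simplex_vertices Q" and N2: "CARD('n) \<ge> 2" and x: "x \<noteq> 0" and y: "y \<noteq> 0"
  shows "\<exists>A\<in>rotF Q. (A *v x) \<bullet> y > 0"
proof -
  obtain \<pi> where p: "\<pi> permutes Q" and d: "det (matrix (Bmap Q \<pi>)) = 1" and pos: "Bmap Q \<pi> x \<bullet> y > 0"
    using exists_pos_perm[OF Q N2 x y] by blast
  have "matrix (Bmap Q \<pi>) \<in> rotF Q" unfolding rotF_def using p d by auto
  moreover have "matrix (Bmap Q \<pi>) *v x = Bmap Q \<pi> x" by (simp add: matrix_works linear_Bmap)
  ultimately show ?thesis using pos by metis
qed

lemma rotF_uniform:
  fixes Q :: "(real^'n) set"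
  assumes Q: "regular_simplex_vertices Q" and N2: "CARD('n) \<ge> 2"
  shows "\<exists>c>0. \<forall>x\<in>sphere 0 1. \<forall>y. (\<Sum>A\<in>rotF Q. max 0 ((A *v x) \<bullet> y)) \<ge> c * norm y"
proof -
  define G where "G p = (\<Sum>A\<in>rotF Q. max 0 ((A *v fst p) \<bullet> snd p))" for p :: "(real^'n) \<times> (real^'n)"
  let ?S = "sphere (0::real^'n) 1 \<times> sphere (0::real^'n) 1"
  have cpt: "compact ?S" by (intro compact_Times compact_sphere)
  have ne: "?S \<noteq> {}"
  proof -
    obtain i :: 'n where True by blast
    have "(axis i 1, axis i 1) \<in> ?S" by simp
    then show ?thesis by blast
  qed
  have cont: "continuous_on ?S G"
    unfolding G_def by (intro continuous_intros continuous_on_max linear_continuous_on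
      bounded_linear_compose[OF matrix_vector_mul_bounded_linear] bounded_linear_fst)
  obtain p0 where p0: "p0 \<in> ?S" and minp: "\<And>p. p \<in> ?S \<Longrightarrow> G p0 \<le> G p"
    using continuous_attains_inf[OF cpt ne cont] by blast
  have Gpos: "G p > 0" if p: "p \<in> ?S" for p
  proof -
    have "fst p \<noteq> 0" "snd p \<noteq> 0" using p by auto
    then obtain A where A: "A \<in> rotF Q" "(A *v fst p) \<bullet> snd p > 0" using rotF_pos[OF Q N2] by blast
    show ?thesis unfolding G_def
      by (rule sum_pos2[OF rotF_finite[OF Q] A(1)]) (use A(2) in auto)
  qed
  define c where "c = G p0"
  have c: "c > 0" using Gpos[OF p0] by (simp add: c_def)
  have "\<forall>x\<in>sphere 0 1. \<forall>y. (\<Sum>A\<in>rotF Q. max 0 ((A *v x) \<bullet> y)) \<ge> c * norm y"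
  proof (intro ballI allI)
    fix x y :: "real^'n" assume x: "x \<in> sphere 0 1"
    show "(\<Sum>A\<in>rotF Q. max 0 ((A *v x) \<bullet> y)) \<ge> c * norm y"
    proof (cases "y = 0")
      case True then show ?thesis by simp
    next
      case False
      then have ny: "norm y > 0" by simp
      have "(x, y /\<^sub>R norm y) \<in> ?S" using x ny by simp
      then have "c \<le> G (x, y /\<^sub>R norm y)" using minp by (simp add: c_def)
      also have "G (x, y /\<^sub>R norm y) = (\<Sum>A\<in>rotF Q. max 0 ((A *v x) \<bullet> y)) / norm y"
      proof -
        have m: "max 0 (t / norm y) = max 0 t / norm y" for t
          using ny by (cases "t \<ge> 0") (auto simp: max_def divide_le_0_iff zero_le_divide_iff)
        have ip: "(A *v x) \<bullet> (y /\<^sub>R norm y) = ((A *v x) \<bullet> y) / norm y" for A :: "real^'n^'n"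
          by (simp add: divide_inverse mult.commute)
        show ?thesis unfolding G_def sum_divide_distrib fst_conv snd_conv ip m ..
      qed
      finally show ?thesis using ny by (simp add: field_simps)
    qed
  qed
  then show ?thesis using c by blast
qed



lemma dir_bound:
  fixes x \<theta> :: "'a::real_normed_vector"
  assumes x: "x \<noteq> 0" and th: "norm \<theta> = 1" and s: "s \<ge> 0"
  shows "norm (x /\<^sub>R norm x - \<theta>) \<le> 2 * norm (x - s *\<^sub>R \<theta>) / norm x"
proof -
  have nx: "norm x > 0" using x by simp
  have "x /\<^sub>R norm x - \<theta> = (x - norm x *\<^sub>R \<theta>) /\<^sub>R norm x" using nx by (simp add: algebra_simps)
  then have e: "norm (x /\<^sub>R norm x - \<theta>) = norm (x - norm x *\<^sub>R \<theta>) / norm x" using nx by (simp add: divide_inverse mult.commute)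
  have "norm (x - norm x *\<^sub>R \<theta>) \<le> norm (x - s *\<^sub>R \<theta>) + norm (s *\<^sub>R \<theta> - norm x *\<^sub>R \<theta>)"
    by (rule norm_diff_triangle_le[of _ "s *\<^sub>R \<theta>"]) simp_all
  also have "norm (s *\<^sub>R \<theta> - norm x *\<^sub>R \<theta>) = \<bar>s - norm x\<bar>"
    using th by (simp add: scaleR_diff_left[symmetric])
  also have "\<bar>s - norm x\<bar> = \<bar>norm (s *\<^sub>R \<theta>) - norm x\<bar>" using th s by simp
  also have "\<dots> \<le> norm (s *\<^sub>R \<theta> - x)" by (rule norm_triangle_ineq3)
  also have "\<dots> = norm (x - s *\<^sub>R \<theta>)" by (rule norm_minus_commute)
  finally have "norm (x - norm x *\<^sub>R \<theta>) \<le> 2 * norm (x - s *\<^sub>R \<theta>)" by simp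
  then show ?thesis unfolding e using nx by (simp add: divide_right_mono)
qed

lemma geom_sum_le:
  assumes n: "n \<ge> 1"
  shows "(\<Sum>k\<le>m. (2::real) ^ (k * n)) \<le> 2 * 2 ^ (m * n)"
proof (induction m)
  case 0 then show ?case by simp
next
  case (Suc m)
  have "(2::real) ^ 1 \<le> 2 ^ n" using n by (intro power_increasing) auto
  then have "2 * (2::real) ^ (m * n) \<le> 2 ^ n * 2 ^ (m * n)" by simp
  also have "\<dots> = 2 ^ (Suc m * n)" by (simp add: power_add)
  finally have h: "2 * (2::real) ^ (m * n) \<le> 2 ^ (Suc m * n)" .
  have "(\<Sum>k\<le>Suc m. (2::real) ^ (k * n)) = (\<Sum>k\<le>m. 2 ^ (k * n)) + 2 ^ (Suc m * n)" by simp
  also have "\<dots> \<le> 2 * 2 ^ (m * n) + 2 ^ (Suc m * n)" using Suc.IH by simp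
  also have "\<dots> \<le> 2 * 2 ^ (Suc m * n)" using h by simp
  finally show ?case .
qed

lemma measure_ball_scale:
  fixes c :: "'a::euclidean_space"
  assumes "r \<ge> 0"
  shows "measure lebesgue (ball c r) = r ^ DIM('a) * measure lebesgue (ball (0::'a) 1)"
  using content_ball_conv_unit_ball[OF assms, of c] by (simp add: measure_completion)

definition lbD :: "real \<Rightarrow> real" where "lbD R0 = 16 + 8 * R0"
definition lbK :: "real \<Rightarrow> nat \<Rightarrow> nat" where "lbK R0 n = nat \<lceil>32 * lbD R0 ^ n\<rceil> + 1"
definition lbeps :: "real \<Rightarrow> nat \<Rightarrow> real" where "lbeps R0 n = (1/2) ^ lbK R0 n / lbD R0"

lemma powr_half_bound:
  fixes t p :: real and k n :: nat
  assumes t: "0 < t" "t \<le> (1/2)^k" and p: "p \<le> - real n"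
  shows "t powr p \<ge> 2 ^ (k * n)"
proof -
  have h1: "((1/2::real)^k) powr p \<le> t powr p"
    using t p by (intro powr_mono2') auto
  have b1: "(1/2::real)^k \<le> 1" by (simp add: power_le_one)
  have h2: "((1/2::real)^k) powr (- real n) \<le> ((1/2::real)^k) powr p"
    using b1 p by (intro powr_mono') auto
  have "((1/2::real)^k) powr (- real n) = inverse (((1/2::real)^k) powr (real n))"
    by (simp add: powr_minus)
  also have "((1/2::real)^k) powr (real n) = ((1/2::real)^k) ^ n"
    by (simp add: powr_realpow)
  also have "inverse (((1/2::real)^k) ^ n) = 2 ^ (k * n)"
    by (simp add: power_mult power_one_over)
  finally show ?thesis using h1 h2 by simp
qed

lemma lower_bound:
  fixes u :: "'a::euclidean_space \<Rightarrow> real" and \<theta> :: 'a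
  assumes N2: "DIM('a) \<ge> 2" and R0: "R0 > 0" and p: "p \<le> - (real DIM('a) - 1)"
    and upos: "\<forall>x\<in>sphere 0 1. u x > 0"
    and lip: "\<forall>x\<in>sphere 0 1. \<forall>z\<in>sphere 0 1. u x \<le> u z + R0 * norm (x - z)"
    and fint: "(\<lambda>x. u (x /\<^sub>R norm x) powr p) integrable_on ball 0 1"
    and fI: "integral (ball 0 1) (\<lambda>x. u (x /\<^sub>R norm x) powr p) = integral (ball 0 1) (\<lambda>x::'a. 1::real)"
    and th: "\<theta> \<in> sphere 0 1"
  shows "u \<theta> > lbeps R0 (DIM('a) - 1)"
proof (rule ccontr)
  assume "\<not> u \<theta> > lbeps R0 (DIM('a) - 1)"
  then have ut: "u \<theta> \<le> lbeps R0 (DIM('a) - 1)" by simp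
  define n where "n = DIM('a) - 1"
  have n1: "n \<ge> 1" using N2 by (simp add: n_def)
  have Nn: "DIM('a) = n + 1" using N2 by (simp add: n_def)
  have pn: "p \<le> - real n" using p N2 by (simp add: n_def of_nat_diff)
  define D where "D = lbD R0"
  have D16: "D \<ge> 16" using R0 by (simp add: D_def lbD_def)
  define K where "K = lbK R0 n"
  define f where "f x = u (x /\<^sub>R norm x) powr p" for x :: 'a
  define \<omega> where "\<omega> = measure lebesgue (ball (0::'a) 1)"
  have I\<omega>: "integral (ball (0::'a) 1) (\<lambda>x. 1) = \<omega>"
    unfolding \<omega>_def by (rule lmeasure_integral[symmetric]) simp
  have \<omega>pos: "\<omega> > 0"
    unfolding \<omega>_def using content_ball_pos[of 1 "0::'a"] by (simp add: measure_completion)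
  define r where "r k = (1/2::real)^k / D" for k :: nat
  have rpos: "r k > 0" for k using D16 by (simp add: r_def)
  have rle: "r k \<le> 1/16" for k
  proof -
    have "(1/2::real)^k \<le> 1" by (simp add: power_le_one)
    then show ?thesis using D16 unfolding r_def by (simp add: divide_le_eq) 
  qed
  have Dr: "D * r k = (1/2)^k" for k using D16 by (simp add: r_def)
  have ueps: "u \<theta> \<le> r k" if "k < K" for k
  proof -
    have "(1/2::real)^K \<le> (1/2)^k" using that by (intro power_decreasing) auto
    then have "lbeps R0 n \<le> r k" unfolding lbeps_def r_def K_def[symmetric] D_def[symmetric]
      using D16 by (simp add: divide_right_mono)
    then show ?thesis using ut by (simp add: n_def)
  qed
  define J where "J k = nat \<lfloor>1 / (8 * r k)\<rfloor>" for k
  define sc where "sc k j = 1/4 + (2 * real j + 1) * r k" for k j :: nat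
  define B where "B k j = ball (sc k j *\<^sub>R \<theta>) (r k)" for k j
  have nth: "norm \<theta> = 1" using th by simp
  have JJ: "real (J k) \<le> 1 / (8 * r k)" for k
    unfolding J_def using rpos[of k] by (simp add: of_nat_nat) 
  have F1: "x \<in> ball 0 1 \<and> x \<noteq> 0 \<and> norm (x /\<^sub>R norm x - \<theta>) \<le> 8 * r k"
    if j: "j < J k" and x: "x \<in> B k j" for k j x
  proof -
    have "real j + 1 \<le> real (J k)" using j by simp
    then have "(real j + 1) * (8 * r k) \<le> real (J k) * (8 * r k)"
      using rpos[of k] by (intro mult_right_mono) auto
    also have "\<dots> \<le> 1" using JJ[of k] rpos[of k] by (simp add: le_divide_eq)
    finally have "(real j + 1) * (8 * r k) \<le> 1" .
    then have top: "sc k j + r k \<le> 1/2" by (simp add: sc_def algebra_simps)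
    have sc0: "sc k j \<ge> 1/4 + r k" using rpos[of k] by (simp add: sc_def)
    have d: "norm (x - sc k j *\<^sub>R \<theta>) < r k" using x by (simp add: B_def dist_norm norm_minus_commute)
    have nsc: "norm (sc k j *\<^sub>R \<theta>) = sc k j" using nth sc0 rpos[of k] by simp
    have "norm x \<le> norm (sc k j *\<^sub>R \<theta>) + norm (x - sc k j *\<^sub>R \<theta>)" by (rule norm_triangle_sub)
    then have xu: "norm x < 1/2" using d nsc top by simp
    have "norm (sc k j *\<^sub>R \<theta>) \<le> norm x + norm (x - sc k j *\<^sub>R \<theta>)"
      by (metis norm_minus_commute norm_triangle_sub)
    then have xl: "norm x \<ge> 1/4" using d nsc sc0 by simp
    have x0: "x \<noteq> 0" using xl by auto
    have "norm (x /\<^sub>R norm x - \<theta>) \<le> 2 * norm (x - sc k j *\<^sub>R \<theta>) / norm x"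
      using dir_bound[OF x0 nth, of "sc k j"] sc0 rpos[of k] by simp
    also have "\<dots> \<le> 2 * r k / (1/4)"
      using d xl rpos[of k] by (intro frac_le) auto
    finally have "norm (x /\<^sub>R norm x - \<theta>) \<le> 8 * r k" by simp
    then show ?thesis using xu x0 by simp
  qed
  have F2: "f x \<ge> 2 ^ (k * n)" if k: "k < K" and j: "j < J k" and x: "x \<in> B k j" for k j x
  proof -
    have h: "x \<noteq> 0" "norm (x /\<^sub>R norm x - \<theta>) \<le> 8 * r k" using F1[OF j x] by auto
    have xs: "x /\<^sub>R norm x \<in> sphere 0 1" using h(1) by simp
    have "u (x /\<^sub>R norm x) \<le> u \<theta> + R0 * norm (x /\<^sub>R norm x - \<theta>)" using lip xs th by blast
    also have "\<dots> \<le> r k + R0 * (8 * r k)"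
      using ueps[OF k] h(2) R0 by (intro add_mono mult_left_mono) auto
    also have "\<dots> \<le> D * r k" using rpos[of k] unfolding D_def lbD_def by (simp add: algebra_simps)
    also have "\<dots> = (1/2)^k" by (rule Dr)
    finally have "u (x /\<^sub>R norm x) \<le> (1/2)^k" .
    moreover have "u (x /\<^sub>R norm x) > 0" using upos xs by blast
    ultimately show ?thesis unfolding f_def using powr_half_bound[OF _ _ pn] by blast
  qed
  have F3: "x \<notin> B k j'" if j: "j < J k" and j': "j' < J k" and jj: "j \<noteq> j'" and x: "x \<in> B k j" for k j j' x
  proof
    assume x': "x \<in> B k j'"
    have "norm (sc k j *\<^sub>R \<theta> - sc k j' *\<^sub>R \<theta>) < 2 * r k"
    proof -
      have "norm (sc k j *\<^sub>R \<theta> - sc k j' *\<^sub>R \<theta>) \<le> norm (sc k j *\<^sub>R \<theta> - x) + norm (x - sc k j' *\<^sub>R \<theta>)"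
        by (rule norm_diff_triangle_le[of _ x]) simp_all
      moreover have "norm (sc k j *\<^sub>R \<theta> - x) < r k" using x by (simp add: B_def dist_norm)
      moreover have "norm (x - sc k j' *\<^sub>R \<theta>) < r k" using x' by (simp add: B_def dist_norm norm_minus_commute)
      ultimately show ?thesis by simp
    qed
    moreover have "norm (sc k j *\<^sub>R \<theta> - sc k j' *\<^sub>R \<theta>) = \<bar>sc k j - sc k j'\<bar>"
      using nth by (simp add: scaleR_diff_left[symmetric])
    moreover have "\<bar>sc k j - sc k j'\<bar> = \<bar>real j - real j'\<bar> * (2 * r k)"
    proof -
      have "sc k j - sc k j' = (real j - real j') * (2 * r k)" by (simp add: sc_def algebra_simps)
      then have "\<bar>sc k j - sc k j'\<bar> = \<bar>real j - real j'\<bar> * (2 * r k)"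
        using rpos[of k] by (simp add: abs_mult)
      then show ?thesis .
    qed
    moreover have "\<bar>real j - real j'\<bar> \<ge> 1" using jj by linarith
    moreover have "\<bar>real j - real j'\<bar> * (2 * r k) \<ge> 1 * (2 * r k)"
      using \<open>\<bar>real j - real j'\<bar> \<ge> 1\<close> rpos[of k] by (intro mult_right_mono) auto
    ultimately show False by linarith
  qed
  have F4: "measure lebesgue (B k j) = r k ^ DIM('a) * \<omega>" for k j
    unfolding B_def \<omega>_def using rpos[of k] by (intro measure_ball_scale) simp
  have F5: "real (J k) * r k ^ DIM('a) \<ge> r k ^ n / 16" for k
  proof -
    define y where "y = 1 / (8 * r k)"
    have y0: "y \<ge> 0" using rpos[of k] by (simp add: y_def)
    have "real (J k) = real_of_int \<lfloor>y\<rfloor>" unfolding J_def y_def[symmetric] using y0 by simp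
    then have a: "real (J k) \<ge> y - 1" by linarith
    have b: "y \<ge> 2" using rle[of k] rpos[of k] unfolding y_def by (simp add: le_divide_eq)
    have yy: "1 / (16 * r k) = y / 2" unfolding y_def by simp
    have "real (J k) \<ge> 1 / (16 * r k)" unfolding yy using a b by linarith
    then have "real (J k) * r k ^ DIM('a) \<ge> 1 / (16 * r k) * r k ^ DIM('a)"
      using rpos[of k] by (intro mult_right_mono) auto
    also have "1 / (16 * r k) * r k ^ DIM('a) = r k ^ n / 16"
      using rpos[of k] unfolding Nn by (simp add: field_simps)
    finally show ?thesis .
  qed
  define ind where "ind k x = (\<Sum>j<J k. indicator (B k j) x :: real)" for k x
  have F6: "0 \<le> ind k x \<and> ind k x \<le> 1 \<and> (ind k x \<noteq> 0 \<longrightarrow> (\<exists>j<J k. x \<in> B k j))" for k x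
  proof (cases "\<exists>j<J k. x \<in> B k j")
    case True
    then obtain j1 where j1: "j1 < J k" "x \<in> B k j1" by auto
    have "ind k x = indicator (B k j1) x + (\<Sum>j\<in>{..<J k} - {j1}. indicator (B k j) x)"
      unfolding ind_def using j1 by (simp add: sum.remove)
    also have "(\<Sum>j\<in>{..<J k} - {j1}. indicator (B k j) x :: real) = 0"
      using F3[OF j1(1) _ _ j1(2)] by (intro sum.neutral) auto
    finally have "ind k x = 1" using j1 by simp
    then show ?thesis using True by simp
  next
    case False
    then have "ind k x = 0" unfolding ind_def by (intro sum.neutral) auto
    then show ?thesis by simp
  qed
  define \<gamma> where "\<gamma> k = (2::real) ^ (k * n) / 2" for k
  define g where "g x = (\<Sum>k<K. \<gamma> k * ind k x)" for x
  have fnn: "f x \<ge> 0" for x by (simp add: f_def)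
  have F7: "g x \<le> f x" for x
  proof (cases "\<exists>k<K. ind k x \<noteq> 0")
    case False
    then have "g x = 0" unfolding g_def by (intro sum.neutral) auto
    then show ?thesis using fnn by simp
  next
    case True
    define k0 where "k0 = Max {k. k < K \<and> ind k x \<noteq> 0}"
    have finS: "finite {k. k < K \<and> ind k x \<noteq> 0}" by simp
    have k0in: "k0 \<in> {k. k < K \<and> ind k x \<noteq> 0}" unfolding k0_def using True finS by (intro Max_in) auto
    have k0max: "k \<le> k0" if "k < K" "ind k x \<noteq> 0" for k
      unfolding k0_def using finS that by (intro Max_ge) auto
    have "g x \<le> (\<Sum>k<K. if k \<le> k0 then \<gamma> k else 0)"
      unfolding g_def
    proof (rule sum_mono)
      fix k assume k: "k \<in> {..<K}"
      show "\<gamma> k * ind k x \<le> (if k \<le> k0 then \<gamma> k else 0)"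
      proof (cases "k \<le> k0")
        case True
        have "\<gamma> k \<ge> 0" by (simp add: \<gamma>_def)
        then show ?thesis using True F6[of k x] by (simp add: mult_left_le)
      next
        case False
        then have "ind k x = 0" using k0max[of k] k by auto
        then show ?thesis using False by simp
      qed
    qed
    also have "(\<Sum>k<K. if k \<le> k0 then \<gamma> k else 0) = (\<Sum>k\<le>k0. \<gamma> k)"
    proof -
      have "(\<Sum>k<K. if k \<le> k0 then \<gamma> k else 0) = (\<Sum>k\<in>{..<K} \<inter> {k. k \<le> k0}. \<gamma> k)"
        by (simp add: sum.inter_restrict)
      also have "{..<K} \<inter> {k. k \<le> k0} = {..k0}" using k0in by auto
      finally show ?thesis .
    qed
    also have "\<dots> = (\<Sum>k\<le>k0. (2::real) ^ (k * n)) / 2" by (simp add: \<gamma>_def sum_divide_distrib)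
    also have "\<dots> \<le> 2 ^ (k0 * n)" using geom_sum_le[OF n1, of k0] by simp
    also have "\<dots> \<le> f x"
    proof -
      have "ind k0 x \<noteq> 0" "k0 < K" using k0in by auto
      then obtain j where "j < J k0" "x \<in> B k0 j" using F6[of k0 x] by auto
      then show ?thesis using F2 \<open>k0 < K\<close> by blast
    qed
    finally show ?thesis .
  qed
  have hB: "(indicator (B k j) has_integral (r k ^ DIM('a) * \<omega>)) (ball 0 1)" if j: "j < J k" for k j
  proof -
    have sub: "B k j \<subseteq> ball 0 1" using F1[OF j] by blast
    then have BI: "B k j \<inter> ball 0 1 = B k j" by blast
    have lm: "B k j \<inter> ball 0 1 \<in> lmeasurable" by (subst BI) (simp add: B_def)
    have "indicat_real (B k j) integrable_on ball 0 1" using lm by (simp add: integrable_on_indicator)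
    moreover have "integral (ball 0 1) (indicat_real (B k j)) = r k ^ DIM('a) * \<omega>"
      using integral_indicator[OF lm] BI F4 by simp
    ultimately show ?thesis by (metis has_integral_integrable_integral)
  qed
  have hind: "((\<lambda>x. ind k x) has_integral (real (J k) * (r k ^ DIM('a) * \<omega>))) (ball 0 1)" for k
  proof -
    have "((\<lambda>x. \<Sum>j<J k. indicator (B k j) x :: real) has_integral (\<Sum>j<J k. r k ^ DIM('a) * \<omega>)) (ball 0 1)"
      by (rule has_integral_sum) (auto intro: hB)
    then show ?thesis unfolding ind_def by simp
  qed
  define T where "T = (\<Sum>k<K. \<gamma> k * (real (J k) * (r k ^ DIM('a) * \<omega>)))"
  have hg: "(g has_integral T) (ball 0 1)"
    unfolding g_def[abs_def] T_def
    by (rule has_integral_sum) (auto intro: has_integral_mult_right hind)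
  have Tlow: "T \<ge> real K * (\<omega> / (32 * D ^ n))"
  proof -
    have "\<gamma> k * (real (J k) * (r k ^ DIM('a) * \<omega>)) \<ge> \<omega> / (32 * D ^ n)" for k
    proof -
      have g0: "\<gamma> k \<ge> 0" by (simp add: \<gamma>_def)
      have "\<gamma> k * (real (J k) * (r k ^ DIM('a) * \<omega>)) = \<gamma> k * (real (J k) * r k ^ DIM('a)) * \<omega>"
        by (simp add: mult_ac)
      also have "\<dots> \<ge> \<gamma> k * (r k ^ n / 16) * \<omega>"
        using F5[of k] g0 \<omega>pos by (intro mult_right_mono mult_left_mono) auto
      also have "\<gamma> k * (r k ^ n / 16) * \<omega> = \<omega> / (32 * D ^ n)"
      proof -
        have "r k ^ n = ((1/2)^k) ^ n / D ^ n" by (simp add: r_def power_divide power_mult_distrib)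
        moreover have "(2::real) ^ (k * n) * ((1/2)^k) ^ n = 1"
          by (simp add: power_mult[symmetric] power_mult_distrib[symmetric] mult.commute)
        ultimately show ?thesis using D16 by (simp add: \<gamma>_def field_simps)
      qed
      finally show ?thesis .
    qed
    then have "T \<ge> (\<Sum>k<K. \<omega> / (32 * D ^ n))" unfolding T_def by (intro sum_mono) auto
    then show ?thesis by simp
  qed
  have Kbig: "real K > 32 * D ^ n"
  proof -
    have "real K = real (nat \<lceil>32 * D ^ n\<rceil>) + 1" by (simp add: K_def lbK_def D_def)
    moreover have "real (nat \<lceil>32 * D ^ n\<rceil>) \<ge> 32 * D ^ n" by linarith
    ultimately show ?thesis by simp
  qed
  have Dn: "D ^ n > 0" using D16 by simp
  have "real K * (\<omega> / (32 * D ^ n)) > \<omega>"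
  proof -
    have "real K * (\<omega> / (32 * D ^ n)) = (real K / (32 * D ^ n)) * \<omega>" by simp
    moreover have "real K / (32 * D ^ n) > 1" using Kbig Dn by simp
    moreover have "(real K / (32 * D ^ n)) * \<omega> > 1 * \<omega>"
      using \<open>real K / (32 * D ^ n) > 1\<close> \<omega>pos by (intro mult_strict_right_mono) auto
    ultimately show ?thesis by simp
  qed
  then have Tbig: "T > \<omega>" using Tlow by simp
  have "integral (ball 0 1) g \<le> integral (ball 0 1) f"
    using hg fint F7 unfolding f_def[abs_def] by (intro integral_le) auto
  moreover have "integral (ball 0 1) g = T" using hg by (rule integral_unique)
  moreover have "integral (ball 0 1) f = \<omega>"
  proof -
    have "integral (ball 0 1) f = integral (ball 0 1) (\<lambda>x::'a. 1::real)" using fI unfolding f_def[abs_def] .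
    then show ?thesis using I\<omega> by simp
  qed
  ultimately show False using Tbig by simp
qed

lemma exists_le_one:
  fixes u :: "'a::euclidean_space \<Rightarrow> real"
  assumes p: "p < 0"
    and upos: "\<forall>x\<in>sphere 0 1. u x > 0"
    and ucont: "continuous_on (sphere 0 1) u"
    and fint: "(\<lambda>x. u (x /\<^sub>R norm x) powr p) integrable_on ball 0 1"
    and fI: "integral (ball 0 1) (\<lambda>x. u (x /\<^sub>R norm x) powr p) = integral (ball 0 1) (\<lambda>x::'a. 1::real)"
  shows "\<exists>x\<in>sphere (0::'a) 1. u x \<le> 1"
proof (rule ccontr)
  assume "\<not> ?thesis"
  then have gt: "\<And>x. x \<in> sphere (0::'a) 1 \<Longrightarrow> u x > 1" by force
  define \<omega> where "\<omega> = measure lebesgue (ball (0::'a) 1)"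
  have I\<omega>: "integral (ball (0::'a) 1) (\<lambda>x. 1) = \<omega>"
    unfolding \<omega>_def by (rule lmeasure_integral[symmetric]) simp
  have \<omega>pos: "\<omega> > 0"
    unfolding \<omega>_def using content_ball_pos[of 1 "0::'a"] by (simp add: measure_completion)
  have ne: "sphere (0::'a) 1 \<noteq> {}"
  proof -
    obtain b :: 'a where "b \<in> Basis" using nonempty_Basis by blast
    then have "b \<in> sphere 0 1" by simp
    then show ?thesis by blast
  qed
  obtain xm where xm: "xm \<in> sphere (0::'a) 1" and minu: "\<And>x. x \<in> sphere 0 1 \<Longrightarrow> u xm \<le> u x"
    using continuous_attains_inf[OF compact_sphere ne ucont] by blast
  define m where "m = u xm"
  have m1: "m > 1" using gt[OF xm] by (simp add: m_def)
  have mp: "m powr p < 1" using powr_less_one[OF m1 p] .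
  define f where "f x = u (x /\<^sub>R norm x) powr p" for x :: 'a
  define f' where "f' x = (if x = 0 then 0 else f x)" for x :: 'a
  have ff': "integral (ball 0 1) f' = integral (ball 0 1) f"
    by (rule integral_spike[of "{0}"]) (auto simp: f'_def)
  have f'int: "f' integrable_on ball 0 1"
    using fint unfolding f_def[abs_def] by (rule integrable_spike[of _ _ "{0}"]) (auto simp: f'_def f_def)
  have f'le: "f' x \<le> m powr p" if "x \<in> ball 0 1" for x
  proof (cases "x = 0")
    case True then show ?thesis by (simp add: f'_def)
  next
    case False
    then have xs: "x /\<^sub>R norm x \<in> sphere 0 1" by simp
    have "m \<le> u (x /\<^sub>R norm x)" using minu[OF xs] by (simp add: m_def)
    then have "u (x /\<^sub>R norm x) powr p \<le> m powr p" using p m1 by (intro powr_mono2') auto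
    then show ?thesis using False by (simp add: f'_def f_def)
  qed
  have cint: "(\<lambda>x. m powr p) integrable_on ball (0::'a) 1" by (rule integrable_on_const) simp
  have "integral (ball 0 1) f' \<le> integral (ball 0 1) (\<lambda>x::'a. m powr p)"
    using integral_le[OF f'int cint] f'le by blast
  also have "integral (ball 0 1) (\<lambda>x::'a. m powr p) = m powr p * \<omega>"
  proof -
    have "integral (ball 0 1) (\<lambda>x::'a. m powr p) = integral (ball 0 1) (\<lambda>x::'a. (m powr p) *\<^sub>R (1::real))" by simp
    also have "\<dots> = (m powr p) *\<^sub>R integral (ball 0 1) (\<lambda>x::'a. 1::real)" by (rule integral_cmul)
    finally show ?thesis using I\<omega> by simp
  qed
  finally have "integral (ball 0 1) f \<le> m powr p * \<omega>" using ff' by simp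
  moreover have "integral (ball 0 1) f = \<omega>" using fI I\<omega> unfolding f_def[abs_def] by simp
  ultimately have "\<omega> \<le> m powr p * \<omega>" by simp
  moreover have "m powr p * \<omega> < 1 * \<omega>" using mp \<omega>pos by (intro mult_strict_right_mono) auto
  ultimately show False by simp
qed



lemma rot_norm:
  fixes A :: "real^'n^'n"
  assumes "A \<in> simplex_rotations Q"
  shows "norm (A *v x) = norm x"
proof -
  have "orthogonal_matrix A" using assms by (simp add: simplex_rotations_def rotation_matrix_def)
  then have "orthogonal_transformation (\<lambda>x. A *v x)"
    by (simp add: orthogonal_transformation_matrix)
  then show ?thesis unfolding orthogonal_transformation by blast
qed

theorem proposition5p1:
  fixes Q :: "(real^'n) set" and p :: real
  assumes "CARD('n) \<ge> 2"
    and "regular_simplex_vertices Q"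
    and "p \<le> - (real CARD('n) - 1)"
  shows "\<exists>C>0. \<forall>u\<in>class_B Q p.
           lip_norm u \<le> ereal C \<and> (\<forall>x\<in>sphere 0 1. u x \<ge> 1 / C)"
proof -
  note N2 = assms(1) and Q = assms(2) and p = assms(3)
  obtain c0 where c0: "c0 > 0" and unif: "\<forall>x\<in>sphere 0 1. \<forall>y. (\<Sum>A\<in>rotF Q. max 0 ((A *v x) \<bullet> y)) \<ge> c0 * norm y"
    using rotF_uniform[OF Q N2] by blast
  define R0 where "R0 = real (card (rotF Q)) / c0 + 1"
  have R0pos: "R0 > 0" using c0 unfolding R0_def by (intro add_nonneg_pos) auto
  define \<epsilon>0 where "\<epsilon>0 = lbeps R0 (CARD('n) - 1)"
  have e0pos: "\<epsilon>0 > 0" unfolding \<epsilon>0_def lbeps_def lbD_def using R0pos by simp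
  define C where "C = max (2 * R0) (1 / \<epsilon>0)"
  have Cpos: "C > 0" using R0pos by (simp add: C_def)
  have pneg: "p < 0" using p N2 by simp
  have main: "lip_norm u \<le> ereal C \<and> (\<forall>x\<in>sphere 0 1. u x \<ge> 1 / C)" if uB: "u \<in> class_B Q p" for u
  proof -
    from uB have uH: "u \<in> Hstar_plus" and usym: "symmetric_wrt Q u"
      and uint: "sphere_integral (\<lambda>x. u x powr p) = sphere_area TYPE('n)"
      by (auto simp: class_B_def)
    obtain K where Kc: "compact K" and Ki: "interior K \<noteq> {}"
      and uK: "\<forall>x\<in>sphere 0 1. u x = support_fun K x \<and> u x > 0"
      using uH unfolding Hstar_plus_def by blast
    have Kne: "K \<noteq> {}" using Ki interior_subset by blast
    obtain y0 where y0K: "y0 \<in> K" and y0max: "\<And>y. y \<in> K \<Longrightarrow> norm y \<le> norm y0"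
      using continuous_attains_sup[OF Kc Kne continuous_on_norm_id] by blast
    define R where "R = norm y0"
    have bdd: "bdd_above ((\<lambda>y. x \<bullet> y) ` K)" for x :: "real^'n"
    proof (rule bdd_aboveI2)
      fix y assume "y \<in> K"
      have "x \<bullet> y \<le> norm x * norm y" by (rule norm_cauchy_schwarz)
      also have "\<dots> \<le> norm x * R" using y0max[OF \<open>y \<in> K\<close>] by (simp add: R_def mult_left_mono)
      finally show "x \<bullet> y \<le> norm x * R" .
    qed
    have upos: "\<forall>x\<in>sphere 0 1. u x > 0" using uK by blast
    have uge: "x \<bullet> y \<le> u x" if "x \<in> sphere 0 1" "y \<in> K" for x y
    proof -
      have "x \<bullet> y \<le> support_fun K x" unfolding support_fun_def using bdd that(2) by (rule cSUP_upper2) simp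
      then show ?thesis using uK that(1) by simp
    qed
    have ulip: "u x \<le> u z + R * norm (x - z)" if x: "x \<in> sphere 0 1" and z: "z \<in> sphere 0 1" for x z
    proof -
      have "support_fun K x \<le> u z + R * norm (x - z)" unfolding support_fun_def
      proof (rule cSUP_least[OF Kne])
        fix y assume y: "y \<in> K"
        have "x \<bullet> y = z \<bullet> y + (x - z) \<bullet> y" by (simp add: inner_diff_left)
        also have "(x - z) \<bullet> y \<le> norm (x - z) * norm y" by (rule norm_cauchy_schwarz)
        also have "\<dots> \<le> norm (x - z) * R" using y0max[OF y] by (simp add: R_def mult_left_mono)
        finally show "x \<bullet> y \<le> u z + R * norm (x - z)" using uge[OF z y] by (simp add: mult.commute)
      qed
      then show ?thesis using uK x by simp
    qed
    have ule: "u x \<le> R" if x: "x \<in> sphere 0 1" for x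
    proof -
      have "support_fun K x \<le> R" unfolding support_fun_def
      proof (rule cSUP_least[OF Kne])
        fix y assume y: "y \<in> K"
        have "x \<bullet> y \<le> norm x * norm y" by (rule norm_cauchy_schwarz)
        also have "\<dots> \<le> R" using y0max[OF y] x by (simp add: R_def)
        finally show "x \<bullet> y \<le> R" .
      qed
      then show ?thesis using uK x by simp
    qed
    have uabs: "\<bar>u x - u z\<bar> \<le> R * norm (x - z)" if "x \<in> sphere 0 1" "z \<in> sphere 0 1" for x z
      using ulip[OF that] ulip[OF that(2,1)] by (simp add: norm_minus_commute abs_le_iff)
    have R0': "R \<ge> 0" by (simp add: R_def)
    have ucont: "continuous_on (sphere 0 1) u"
    proof (rule lipschitz_on_continuous_on)
      show "R-lipschitz_on (sphere 0 1) u"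
        by (rule lipschitz_onI) (use uabs R0' in \<open>auto simp: dist_norm dist_real_def\<close>)
    qed
    have Npos: "real CARD('n) > 0" by simp
    have fI: "integral (ball 0 1) (\<lambda>x. u (x /\<^sub>R norm x) powr p) = integral (ball 0 1) (\<lambda>x::real^'n. 1::real)"
      using uint Npos unfolding sphere_area_def sphere_integral_def by simp
    have I1: "integral (ball 0 1) (\<lambda>x::real^'n. 1::real) > 0"
      using lmeasure_integral[of "ball (0::real^'n) 1"] content_ball_pos[of 1 "0::real^'n"]
      by (simp add: measure_completion)
    have fint: "(\<lambda>x. u (x /\<^sub>R norm x) powr p) integrable_on ball (0::real^'n) 1"
      using fI I1 not_integrable_integral by fastforce
    obtain x0 where x0: "x0 \<in> sphere 0 1" and ux0: "u x0 \<le> 1"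
      using exists_le_one[OF pneg upos ucont fint fI] by blast
    have RR0: "R \<le> R0"
    proof -
      have "c0 * norm y0 \<le> (\<Sum>A\<in>rotF Q. max 0 ((A *v x0) \<bullet> y0))" using unif x0 by blast
      also have "\<dots> \<le> (\<Sum>A\<in>rotF Q. 1)"
      proof (rule sum_mono)
        fix A assume A: "A \<in> rotF Q"
        have Ar: "A \<in> simplex_rotations Q" by (rule rotF_sub[OF Q A])
        have Ax: "A *v x0 \<in> sphere 0 1" using rot_norm[OF Ar] x0 by simp
        have "(A *v x0) \<bullet> y0 \<le> u (A *v x0)" by (rule uge[OF Ax y0K])
        also have "u (A *v x0) = u x0" using usym Ar x0 unfolding symmetric_wrt_def by blast
        finally show "max 0 ((A *v x0) \<bullet> y0) \<le> 1" using ux0 by simp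
      qed
      finally have "c0 * R \<le> real (card (rotF Q))" by (simp add: R_def)
      then have "R \<le> real (card (rotF Q)) / c0" using c0 by (simp add: field_simps)
      then show ?thesis by (simp add: R0_def)
    qed
    have lip0: "\<forall>x\<in>sphere 0 1. \<forall>z\<in>sphere 0 1. u x \<le> u z + R0 * norm (x - z)"
    proof (intro ballI)
      fix x z :: "real^'n" assume "x \<in> sphere 0 1" "z \<in> sphere 0 1"
      then have "u x \<le> u z + R * norm (x - z)" by (rule ulip)
      also have "\<dots> \<le> u z + R0 * norm (x - z)" using RR0 by (simp add: mult_right_mono)
      finally show "u x \<le> u z + R0 * norm (x - z)" .
    qed
    have lower: "u x \<ge> 1 / C" if x: "x \<in> sphere 0 1" for x
    proof -
      have "u x > \<epsilon>0" unfolding \<epsilon>0_def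
        using lower_bound[of R0 p u x] N2 R0pos p upos lip0 fint fI x by simp
      moreover have "1 / C \<le> \<epsilon>0"
      proof -
        have "1 / \<epsilon>0 \<le> C" by (simp add: C_def)
        then show ?thesis using e0pos Cpos by (simp add: field_simps)
      qed
      ultimately show ?thesis by simp
    qed
    have lipn: "lip_norm u \<le> ereal (2 * R)"
    proof -
      have s1: "(SUP x\<in>sphere 0 1. ereal \<bar>u x\<bar>) \<le> ereal R"
      proof (rule SUP_least)
        fix x :: "real^'n" assume x: "x \<in> sphere 0 1"
        have "u x > 0" using upos x by blast
        then have "\<bar>u x\<bar> \<le> R" using ule[OF x] by simp
        then show "ereal \<bar>u x\<bar> \<le> ereal R" by simp
      qed
      have s2: "(SUP xy\<in>{(x,y). x \<in> sphere 0 1 \<and> y \<in> sphere 0 1 \<and> x \<noteq> y}.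
          ereal (\<bar>u (fst xy) - u (snd xy)\<bar> / dist (fst xy) (snd xy))) \<le> ereal R"
      proof (rule SUP_least)
        fix xy :: "(real^'n) \<times> (real^'n)"
        assume "xy \<in> {(x,y). x \<in> sphere 0 1 \<and> y \<in> sphere 0 1 \<and> x \<noteq> y}"
        then obtain x y where xy: "xy = (x, y)" "x \<in> sphere 0 1" "y \<in> sphere 0 1" "x \<noteq> y" by auto
        have d: "dist x y > 0" using xy(4) by simp
        have "\<bar>u x - u y\<bar> \<le> R * dist x y" using uabs[OF xy(2,3)] by (simp add: dist_norm)
        then have "\<bar>u x - u y\<bar> / dist x y \<le> R" using d by (simp add: divide_le_eq)
        then show "ereal (\<bar>u (fst xy) - u (snd xy)\<bar> / dist (fst xy) (snd xy)) \<le> ereal R" using xy by simp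
      qed
      have "lip_norm u \<le> ereal R + ereal R" unfolding lip_norm_def using s1 s2 by (rule add_mono)
      then show ?thesis by simp
    qed
    have "2 * R \<le> C" using RR0 unfolding C_def by linarith
    then have "ereal (2 * R) \<le> ereal C" by simp
    then have "lip_norm u \<le> ereal C" using lipn by (rule order_trans[rotated])
    then show ?thesis using lower by blast
  qed
  show ?thesis using Cpos main by blast
qed


end
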